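(* Let $\eta\in Q^+\setminus\{0\}$, $g\in U(\mathfrak n^-_{r-1}[t])_{-\eta}$, and $(\underline\ell,\underline{\mathbf s})\in\mathbf F_+^r$. Then $[\underline{\mathbf x}^+_r(\underline\ell,\underline{\mathbf s}),g]$ is a linear combination of elements $g'\,\underline{\mathbf x}^+_r(\underline\ell',\underline{\mathbf s}')$ with $g'\in U(\mathfrak n^-_{r-1}[t])$, $(\underline\ell',\underline{\mathbf s}')\in\mathbf F_+^r$ and $|\underline{\mathbf s}'|\blacktriangleright|\underline{\mathbf s}|$.
   Context: $\mathfrak g=\mathfrak{sl}_{r+1}(\mathbb C)$, $r\ge2$, $\mathfrak h$ diagonal, simple roots $\alpha_i$, $Q^+=\sum\mathbb N\alpha_i$; $x^+_{i,j}=E_{i,j+1}$, $x^-_{i,j}=E_{j+1,i}$; $\mathfrak n^-_{r-1}=\bigoplus_{1\le i\le j\le r-1}\mathbb Cx^-_{i,j}$; $\mathfrak a[t]=\mathfrak a\otimes\mathbb C[t]$. $U(\mathfrak n^-_{r-1}[t])_{-\eta}$ is the $-\eta$ weight space for the adjoint action of $\mathfrak h$. $\mathbf F_+$: pairs $(\ell,\mathbf s)$ with $\ell\in\mathbb N$, $\mathbf s=(\mathbf s(1)\le\dots\le\mathbf s(\ell))$, all $\mathbf s(p)\in\mathbb N_+$ (including $(0,\emptyset)$), $|\mathbf s|=\sum\mathbf s(p)$. $\mathbf x^+_{i,r}(\ell,\mathbf s)=\prod_p(x^+_{i,r}\otimes t^{\mathbf s(p)})$, $\underline{\mathbf x}^+_r(\underline\ell,\underline{\mathbf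 s})=\mathbf x^+_{1,r}(\ell_1,\mathbf s_1)\cdots\mathbf x^+_{r,r}(\ell_r,\mathbf s_r)$, $|\underline{\mathbf s}|=(|\mathbf s_1|,\dots,|\mathbf s_r|)$. For $\underline d,\underline d'\in\mathbb N^r$, $\underline d\blacktriangleright\underline d'$ means that for some $s$, $d_i=d'_i$ for all $i>s$ and $d_s>d'_s$. *)

theory Defs
  imports Complex_Main
begin

text \<open>Basis of sl_{r+1}[t]:  E i j k = E_{i,j} \<otimes> t^k  (i \<noteq> j, 1 \<le> i,j \<le> r+1),
  H m k = (E_{m,m} - E_{m+1,m+1}) \<otimes> t^k  (1 \<le> m \<le> r).\<close>
datatype gen = E nat nat nat | H nat nat

fun valid :: "nat \<Rightarrow> gen \<Rightarrow> bool" where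
  "valid r (E i j k) = (1 \<le> i \<and> i \<le> r+1 \<and> 1 \<le> j \<and> j \<le> r+1 \<and> i \<noteq> j)"
| "valid r (H m k) = (1 \<le> m \<and> m \<le> r)"

text \<open>Free associative algebra on the basis: finitely supported functions on words.\<close>
type_synonym fa = "gen list \<Rightarrow> complex"

definition mon :: "gen list \<Rightarrow> fa" where "mon w = (\<lambda>v. if v = w then 1 else 0)"
definition fzero :: fa where "fzero = (\<lambda>_. 0)"
definition fadd :: "fa \<Rightarrow> fa \<Rightarrow> fa" where "fadd f g = (\<lambda>w. f w + g w)"
definition fsub :: "fa \<Rightarrow> fa \<Rightarrow> fa" where "fsub f g = (\<lambda>w. f w - g w)"
definition fscale :: "complex \<Rightarrow> fa \<Rightarrow> fa" where "fscale c f = (\<lambda>w. c * f w)"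
definition fmul :: "fa \<Rightarrow> fa \<Rightarrow> fa" where
  "fmul f g = (\<lambda>w. \<Sum>k\<in>{0..length w}. f (take k w) * g (drop k w))"
definition fcomm :: "fa \<Rightarrow> fa \<Rightarrow> fa" where "fcomm f g = fsub (fmul f g) (fmul g f)"
definition fsum :: "nat \<Rightarrow> (nat \<Rightarrow> fa) \<Rightarrow> fa" where "fsum n F = (\<lambda>w. \<Sum>k<n. F k w)"

text \<open>(E_{ii} - E_{jj}) \<otimes> t^c expressed in the H basis.\<close>
definition hdiff :: "nat \<Rightarrow> nat \<Rightarrow> nat \<Rightarrow> fa" where
  "hdiff i j c = (if i < j then (\<lambda>w. \<Sum>m\<in>{i..<j}. mon [H m c] w)
                 else (\<lambda>w. - (\<Sum>m\<in>{j..<i}. mon [H m c] w)))"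

text \<open>[h_m, E_{ij}] = hcoef m i j * E_{ij}\<close>
definition hcoef :: "nat \<Rightarrow> nat \<Rightarrow> nat \<Rightarrow> complex" where
  "hcoef m i j = (if m = i then 1 else 0) - (if m + 1 = i then 1 else 0)
               - (if m = j then 1 else 0) + (if m + 1 = j then 1 else 0)"

text \<open>Lie bracket of sl_{r+1}[t] on basis elements, as a linear combination of basis elements.\<close>
fun br :: "gen \<Rightarrow> gen \<Rightarrow> fa" where
  "br (E i j a) (E k l b) =
     (if j = k \<and> l = i then hdiff i j (a+b)
      else if j = k then mon [E i l (a+b)]
      else if l = i then fscale (-1) (mon [E k j (a+b)])
      else fzero)"
| "br (H m a) (E i j b) = fscale (hcoef m i j) (mon [E i j (a+b)])"
| "br (E i j b) (H m a) = fscale (- hcoef m i j) (mon [E i j (a+b)])"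
| "br (H m a) (H n b) = fzero"

definition rel :: "gen \<Rightarrow> gen \<Rightarrow> fa" where
  "rel x y = fsub (fsub (mon [x, y]) (mon [y, x])) (br x y)"

text \<open>Two-sided ideal defining U(sl_{r+1}[t]) as quotient of the free algebra.\<close>
inductive_set Uideal :: "nat \<Rightarrow> fa set" for r :: nat where
  zero: "fzero \<in> Uideal r"
| step: "\<lbrakk> a \<in> Uideal r; valid r x; valid r y; list_all (valid r) u; list_all (valid r) v \<rbrakk>
         \<Longrightarrow> fadd a (fscale c (fmul (mon u) (fmul (rel x y) (mon v)))) \<in> Uideal r"

text \<open>Equality in U(sl_{r+1}[t]).\<close>
definition ueq :: "nat \<Rightarrow> fa \<Rightarrow> fa \<Rightarrow> bool" where
  "ueq r f g \<longleftrightarrow> fsub f g \<in> Uideal r"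

text \<open>Generators x^-_{i,j} \<otimes> t^k = E_{j+1,i} \<otimes> t^k of n^-_{r-1}[t], 1 \<le> i \<le> j \<le> r-1.\<close>
definition nminus_gen :: "nat \<Rightarrow> gen \<Rightarrow> bool" where
  "nminus_gen r x \<longleftrightarrow> (\<exists>i j k. 1 \<le> i \<and> i \<le> j \<and> j \<le> r - 1 \<and> x = E (j+1) i k)"

text \<open>U(n^-_{r-1}[t]) inside U(sl_{r+1}[t]): span of monomials in its generators.\<close>
definition Uneg :: "nat \<Rightarrow> fa set" where
  "Uneg r = {f. finite {w. f w \<noteq> 0} \<and> (\<forall>w. f w \<noteq> 0 \<longrightarrow> list_all (nminus_gen r) w)}"

text \<open>eta(h_i) for eta = sum eta_j alpha_j (eta supported on 1..r).\<close>
definition eta_h :: "(nat \<Rightarrow> nat) \<Rightarrow> nat \<Rightarrow> int" where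
  "eta_h eta i = 2 * int (eta i) - int (eta (i - 1)) - int (eta (i + 1))"

text \<open>The -eta weight space of U(n^-_{r-1}[t]) for the adjoint action of h.\<close>
definition weight_space :: "nat \<Rightarrow> (nat \<Rightarrow> nat) \<Rightarrow> fa set" where
  "weight_space r eta = {g \<in> Uneg r. \<forall>i\<in>{1..r}.
      ueq r (fcomm (mon [H i 0]) g) (fscale (- of_int (eta_h eta i)) g)}"

text \<open>F_+ : (l, s) with s nondecreasing of positive integers, encoded as the list s (l = length s).\<close>
definition Fplus :: "nat list \<Rightarrow> bool" where
  "Fplus s \<longleftrightarrow> sorted s \<and> (\<forall>x\<in>set s. 0 < x)"

definition FplusR :: "nat \<Rightarrow> (nat \<Rightarrow> nat list) \<Rightarrow> bool" where
  "FplusR r ss \<longleftrightarrow> (\<forall>i\<in>{1..r}. Fplus (ss i))"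

text \<open>x^+_r(l, s) = x^+_{1,r}(l_1,s_1) ... x^+_{r,r}(l_r,s_r), with x^+_{i,r} = E_{i,r+1}.\<close>
definition xplus :: "nat \<Rightarrow> (nat \<Rightarrow> nat list) \<Rightarrow> fa" where
  "xplus r ss = mon (concat (map (\<lambda>i. map (E i (r+1)) (ss i)) [1..<r+1]))"

definition ssize :: "(nat \<Rightarrow> nat list) \<Rightarrow> nat \<Rightarrow> nat" where
  "ssize ss i = sum_list (ss i)"

definition btri :: "nat \<Rightarrow> (nat \<Rightarrow> nat) \<Rightarrow> (nat \<Rightarrow> nat) \<Rightarrow> bool" where
  "btri r d d' \<longleftrightarrow> (\<exists>s\<in>{1..r}. (\<forall>i. s < i \<and> i \<le> r \<longrightarrow> d i = d' i) \<and> d s > d' s)"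

end

theory Submission
  imports Defs "HOL-Library.Multiset"
begin

lemma fadd_fzero[simp]: "fadd a fzero = a" "fadd fzero a = a"
  by (auto simp: fadd_def fzero_def)

lemma fadd_assoc: "fadd (fadd a b) c = fadd a (fadd b c)"
  by (auto simp: fadd_def)

lemma Uideal_add: "b \<in> Uideal r \<Longrightarrow> a \<in> Uideal r \<Longrightarrow> fadd a b \<in> Uideal r"
proof (induction b rule: Uideal.induct)
  case zero thus ?case by simp
next
  case (step b x y u v c)
  have "fadd a (fadd b M) = fadd (fadd a b) M" for M by (simp add: fadd_assoc)
  thus ?case using step Uideal.step by metis
qed

lemma Uideal_scale: "a \<in> Uideal r \<Longrightarrow> fscale c a \<in> Uideal r"
proof (induction a rule: Uideal.induct)
  case zero
  have "fscale c fzero = fzero" by (auto simp: fscale_def fzero_def)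
  thus ?case using Uideal.zero by simp
next
  case (step b x y u v c')
  have "fscale c (fadd b (fscale c' M)) = fadd (fscale c b) (fscale (c*c') M)" for M
    by (auto simp: fadd_def fscale_def algebra_simps)
  thus ?case using step Uideal.step by metis
qed

lemma ueq_refl: "ueq r a a"
  unfolding ueq_def
proof -
  have "fsub a a = fzero" by (auto simp: fsub_def fzero_def)
  thus "fsub a a \<in> Uideal r" using Uideal.zero by simp
qed

lemma ueq_eq: "a = b \<Longrightarrow> ueq r a b" using ueq_refl by simp

lemma ueq_sym: "ueq r a b \<Longrightarrow> ueq r b a"
  unfolding ueq_def
proof -
  assume "fsub a b \<in> Uideal r"
  moreover have "fsub b a = fscale (-1) (fsub a b)" by (auto simp: fsub_def fscale_def)
  ultimately show "fsub b a \<in> Uideal r" using Uideal_scale by simp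
qed

lemma ueq_trans: "ueq r a b \<Longrightarrow> ueq r b c \<Longrightarrow> ueq r a c"
  unfolding ueq_def
proof -
  assume "fsub a b \<in> Uideal r" "fsub b c \<in> Uideal r"
  moreover have "fsub a c = fadd (fsub a b) (fsub b c)" by (auto simp: fsub_def fadd_def)
  ultimately show "fsub a c \<in> Uideal r" using Uideal_add by simp
qed

lemma ueq_add: "ueq r a b \<Longrightarrow> ueq r c d \<Longrightarrow> ueq r (fadd a c) (fadd b d)"
  unfolding ueq_def
proof -
  assume "fsub a b \<in> Uideal r" "fsub c d \<in> Uideal r"
  moreover have "fsub (fadd a c) (fadd b d) = fadd (fsub a b) (fsub c d)" by (auto simp: fsub_def fadd_def)
  ultimately show "fsub (fadd a c) (fadd b d) \<in> Uideal r" using Uideal_add by simp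
qed

lemma ueq_scale: "ueq r a b \<Longrightarrow> ueq r (fscale c a) (fscale c b)"
  unfolding ueq_def
proof -
  assume "fsub a b \<in> Uideal r"
  moreover have "fsub (fscale c a) (fscale c b) = fscale c (fsub a b)" by (auto simp: fsub_def fscale_def algebra_simps)
  ultimately show "fsub (fscale c a) (fscale c b) \<in> Uideal r" using Uideal_scale by simp
qed

lemma ueq_fsub: "ueq r a (fadd b c) \<Longrightarrow> ueq r (fsub a b) c"
  unfolding ueq_def
proof -
  assume "fsub a (fadd b c) \<in> Uideal r"
  moreover have "fsub (fsub a b) c = fsub a (fadd b c)" by (auto simp: fsub_def fadd_def)
  ultimately show "fsub (fsub a b) c \<in> Uideal r" by simp
qed

lemma fmul_mon_mon: "fmul (mon u) (mon v) = mon (u @ v)"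
proof
  fix w
  have "(\<Sum>k\<in>{0..length w}. mon u (take k w) * mon v (drop k w))
      = (\<Sum>k\<in>{0..length w}. if k = length u then (if w = u @ v then 1 else 0) else 0)"
  proof (rule sum.cong)
    fix k assume k: "k \<in> {0..length w}"
    have "(take k w = u \<and> drop k w = v) \<longleftrightarrow> (k = length u \<and> w = u @ v)"
    proof
      assume h: "take k w = u \<and> drop k w = v"
      hence "w = u @ v" by (metis append_take_drop_id)
      moreover have "length u = k" using h k by auto
      ultimately show "k = length u \<and> w = u @ v" by simp
    qed simp
    have iff: "(take k w = u \<and> drop k w = v) \<longleftrightarrow> (k = length u \<and> w = u @ v)" by fact
    have "mon u (take k w) * mon v (drop k w) = (if take k w = u \<and> drop k w = v then 1 else 0)"
      by (simp add: mon_def)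
    also have "\<dots> = (if k = length u then (if w = u @ v then 1 else 0) else 0)"
      unfolding iff by simp
    finally show "mon u (take k w) * mon v (drop k w) = (if k = length u then (if w = u @ v then 1 else 0) else 0)" .
  qed simp
  also have "\<dots> = mon (u @ v) w" by (auto simp: mon_def)
  finally show "fmul (mon u) (mon v) w = mon (u @ v) w" by (simp add: fmul_def)
qed

lemma fmul_fadd_r: "fmul f (fadd a b) = fadd (fmul f a) (fmul f b)"
  by (auto simp: fmul_def fadd_def distrib_left sum.distrib)
lemma fmul_fadd_l: "fmul (fadd a b) f = fadd (fmul a f) (fmul b f)"
  by (auto simp: fmul_def fadd_def distrib_right sum.distrib)
lemma fmul_fsub_r: "fmul f (fsub a b) = fsub (fmul f a) (fmul f b)"
  by (auto simp: fmul_def fsub_def right_diff_distrib sum_subtractf)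
lemma fmul_fsub_l: "fmul (fsub a b) f = fsub (fmul a f) (fmul b f)"
  by (auto simp: fmul_def fsub_def left_diff_distrib sum_subtractf)
lemma fmul_fscale_r: "fmul f (fscale c a) = fscale c (fmul f a)"
  by (auto simp: fmul_def fscale_def sum_distrib_left algebra_simps)
lemma fmul_fscale_l: "fmul (fscale c a) f = fscale c (fmul a f)"
  by (auto simp: fmul_def fscale_def sum_distrib_left algebra_simps)
lemma fmul_fzero_r: "fmul f fzero = fzero"
  by (auto simp: fmul_def fzero_def)
lemma fmul_fzero_l: "fmul fzero f = fzero"
  by (auto simp: fmul_def fzero_def)

lemma ueq_rel:
  assumes "valid r x" "valid r y" "list_all (valid r) u" "list_all (valid r) v"
  shows "ueq r (mon (u @ x # y # v)) (fadd (mon (u @ y # x # v)) (fmul (mon u) (fmul (br x y) (mon v))))"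
proof -
  have "fscale 1 (fmul (mon u) (fmul (rel x y) (mon v))) \<in> Uideal r"
    using Uideal.step[OF Uideal.zero assms(1-4)] by simp
  moreover have "fscale 1 (fmul (mon u) (fmul (rel x y) (mon v)))
     = fsub (mon (u @ x # y # v)) (fadd (mon (u @ y # x # v)) (fmul (mon u) (fmul (br x y) (mon v))))"
    unfolding rel_def fmul_fsub_l fmul_fsub_r fmul_mon_mon
    by (auto simp: fscale_def fsub_def fadd_def)
  ultimately show ?thesis by (simp add: ueq_def)
qed


fun lsum :: "fa list \<Rightarrow> fa" where
  "lsum [] = fzero"
| "lsum (f # fs) = fadd f (lsum fs)"

lemma lsum_append: "lsum (xs @ ys) = fadd (lsum xs) (lsum ys)"
  by (induction xs) (auto simp: fadd_assoc)

lemma ueq_lsum: "\<forall>x\<in>set xs. ueq r (f x) (g x) \<Longrightarrow> ueq r (lsum (map f xs)) (lsum (map g xs))"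
  by (induction xs) (auto intro: ueq_add ueq_refl)

lemma fscale_lsum: "fscale c (lsum xs) = lsum (map (fscale c) xs)"
  by (induction xs) (auto simp: fscale_def fadd_def fzero_def algebra_simps fun_eq_iff)

lemma fsub_lsum: "fsub (lsum (map f xs)) (lsum (map g xs)) = lsum (map (\<lambda>x. fsub (f x) (g x)) xs)"
  by (induction xs) (auto simp: fsub_def fadd_def fzero_def algebra_simps fun_eq_iff)

lemma fmul_lsum_r: "fmul f (lsum xs) = lsum (map (fmul f) xs)"
  by (induction xs) (auto simp: fmul_fadd_r fmul_fzero_r)

lemma fmul_lsum_l: "fmul (lsum xs) f = lsum (map (\<lambda>a. fmul a f) xs)"
  by (induction xs) (auto simp: fmul_fadd_l fmul_fzero_l)

lemma lsum_fsum: "lsum (map f L) = fsum (length L) (\<lambda>k. f (L ! k))"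
proof (induction L)
  case Nil thus ?case by (auto simp: fsum_def fzero_def)
next
  case (Cons a L)
  show ?case using Cons by (auto simp del: sum.lessThan_Suc simp: fsum_def fadd_def sum.lessThan_Suc_shift fun_eq_iff)
qed

definition isX :: "nat \<Rightarrow> gen \<Rightarrow> bool" where
  "isX r z \<longleftrightarrow> (\<exists>i a. z = E i (r+1) a \<and> 1 \<le> i \<and> i \<le> r \<and> 0 < a)"

lemma isX_valid: "isX r z \<Longrightarrow> valid r z" by (auto simp: isX_def)
lemma isX_valid_list: "list_all (isX r) x \<Longrightarrow> list_all (valid r) x"
  by (induction x) (auto simp: isX_valid)

lemma nminus_valid: "nminus_gen r z \<Longrightarrow> valid r z" by (auto simp: nminus_gen_def)
lemma nminus_valid_list: "list_all (nminus_gen r) x \<Longrightarrow> list_all (valid r) x"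
  by (induction x) (auto simp: nminus_valid)

fun lets :: "nat \<Rightarrow> gen list \<Rightarrow> nat list" where
  "lets i [] = []"
| "lets i (E j k a # x) = (if j = i then a # lets i x else lets i x)"
| "lets i (H m a # x) = lets i x"

definition dd :: "gen list \<Rightarrow> nat \<Rightarrow> nat" where "dd x i = sum_list (lets i x)"

lemma dd_cons: "dd (E j k a # x) = (\<lambda>i. (if j = i then a else 0) + dd x i)"
  by (auto simp: dd_def)

lemma btri_shift: "btri r d' d \<Longrightarrow> btri r (\<lambda>i. e i + d' i) (\<lambda>i. e i + d i)"
  unfolding btri_def by auto

lemma btri_trans: "btri r d2 d1 \<Longrightarrow> btri r d1 d0 \<Longrightarrow> btri r d2 d0"
  unfolding btri_def
proof -
  assume "\<exists>s\<in>{1..r}. (\<forall>i. s < i \<and> i \<le> r \<longrightarrow> d2 i = d1 i) \<and> d1 s < d2 s"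
  then obtain s1 where s1: "s1 \<in> {1..r}" "\<forall>i. s1 < i \<and> i \<le> r \<longrightarrow> d2 i = d1 i" "d1 s1 < d2 s1" by blast
  assume "\<exists>s\<in>{1..r}. (\<forall>i. s < i \<and> i \<le> r \<longrightarrow> d1 i = d0 i) \<and> d0 s < d1 s"
  then obtain s0 where s0: "s0 \<in> {1..r}" "\<forall>i. s0 < i \<and> i \<le> r \<longrightarrow> d1 i = d0 i" "d0 s0 < d1 s0" by blast
  show "\<exists>s\<in>{1..r}. (\<forall>i. s < i \<and> i \<le> r \<longrightarrow> d2 i = d0 i) \<and> d0 s < d2 s"
  proof (cases "s1 < s0")
    case True
    have "\<forall>i. s0 < i \<and> i \<le> r \<longrightarrow> d2 i = d0 i" using s0 s1 True by auto
    moreover have "d0 s0 < d2 s0" using s0 s1 True by auto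
    ultimately show ?thesis using s0 by blast
  next
    case False
    show ?thesis
    proof (cases "s1 = s0")
      case True thus ?thesis using s0 s1 by (intro bexI[of _ s0]) auto
    next
      case False
      hence "s0 < s1" using \<open>\<not> s1 < s0\<close> by simp
      thus ?thesis using s0 s1 by (intro bexI[of _ s1]) auto
    qed
  qed
qed

lemma ueq_rel_comm:
  assumes "isX r z" "isX r z'" "list_all (valid r) u" "list_all (valid r) v"
  shows "ueq r (mon (u @ z # z' # v)) (mon (u @ z' # z # v))"
proof -
  have "br z z' = fzero" using assms(1,2) by (auto simp: isX_def)
  thus ?thesis using ueq_rel[OF isX_valid[OF assms(1)] isX_valid[OF assms(2)] assms(3,4)]
    by (simp add: fmul_fzero_l fmul_fzero_r)
qed

lemma fmul_mon_scale_mon: "fmul (mon u) (fmul (fscale c (mon m)) (mon v)) = fscale c (mon (u @ m @ v))"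
  by (simp add: fmul_fscale_l fmul_fscale_r fmul_mon_mon)

lemma lemA:
  assumes "list_all (isX r) x" "nminus_gen r y" "list_all (valid r) u" "list_all (valid r) v"
  shows "\<exists>T. ueq r (mon (u @ x @ y # v)) (fadd (mon (u @ y # x @ v)) (lsum (map (\<lambda>x'. fscale (-1) (mon (u @ x' @ v))) T)))
            \<and> (\<forall>x'\<in>set T. list_all (isX r) x' \<and> btri r (dd x') (dd x))"
using assms(1,3) proof (induction x arbitrary: u)
  case Nil then show ?case by (intro exI[of _ "[]"]) (simp add: ueq_refl)
next
  case (Cons z x1)
  have zX: "isX r z" and x1X: "list_all (isX r) x1" using Cons.prems by auto
  from zX obtain p a where z: "z = E p (r+1) a" "1 \<le> p" "p \<le> r" "0<a" by (auto simp: isX_def)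
  from assms(2) obtain q p0 b where y: "y = E q p0 b" "1 \<le> p0" "p0 < q" "q \<le> r" 
    by (auto simp: nminus_gen_def)
  have vz: "valid r z" using zX isX_valid by blast
  have vy: "valid r y" using assms(2) nminus_valid by blast
  have vu: "list_all (valid r) (u @ [z])" using Cons.prems vz by simp
  from Cons.IH[OF x1X vu] obtain T1 where
    T1: "ueq r (mon ((u@[z]) @ x1 @ y # v)) (fadd (mon ((u@[z]) @ y # x1 @ v)) (lsum (map (\<lambda>x'. fscale (-1) (mon ((u@[z]) @ x' @ v))) T1)))"
    and T1p: "\<forall>x'\<in>set T1. list_all (isX r) x' \<and> btri r (dd x') (dd x1)" by blast
  define T0 where "T0 = (if p = p0 then [E q (r+1) (a+b) # x1] else [])"
  have vx1v: "list_all (valid r) (x1 @ v)" using isX_valid_list[OF x1X] assms(4) by simp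
  have "br z y = (if p = p0 then fscale (-1) (mon [E q (r+1) (a+b)]) else fzero)"
    using z y by auto
  hence R: "ueq r (mon (u @ z # y # (x1 @ v))) (fadd (mon (u @ y # z # (x1 @ v))) (lsum (map (\<lambda>x'. fscale (-1) (mon (u @ x' @ v))) T0)))"
    using ueq_rel[OF vz vy Cons.prems(2) vx1v] unfolding T0_def
    by (auto simp: fmul_mon_scale_mon fmul_fzero_l fmul_fzero_r)
  define T where "T = T0 @ map (Cons z) T1"
  have "ueq r (mon (u @ (z # x1) @ y # v)) (fadd (fadd (mon (u @ y # z # (x1 @ v))) (lsum (map (\<lambda>x'. fscale (-1) (mon (u @ x' @ v))) T0))) (lsum (map (\<lambda>x'. fscale (-1) (mon ((u@[z]) @ x' @ v))) T1)))"
    using ueq_trans[OF _ ueq_add[OF R ueq_refl]] T1 by simp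
  moreover have "fadd (fadd (mon (u @ y # z # (x1 @ v))) (lsum (map (\<lambda>x'. fscale (-1) (mon (u @ x' @ v))) T0))) (lsum (map (\<lambda>x'. fscale (-1) (mon ((u@[z]) @ x' @ v))) T1))
     = fadd (mon (u @ y # (z # x1) @ v)) (lsum (map (\<lambda>x'. fscale (-1) (mon (u @ x' @ v))) T))"
    unfolding T_def by (simp add: lsum_append fadd_assoc comp_def)
  moreover have "\<forall>x'\<in>set T. list_all (isX r) x' \<and> btri r (dd x') (dd (z # x1))"
  proof
    fix x' assume "x' \<in> set T"
    then consider "x' \<in> set T0" | x2 where "x2 \<in> set T1" "x' = z # x2" unfolding T_def by auto
    thus "list_all (isX r) x' \<and> btri r (dd x') (dd (z # x1))"
    proof cases
      case 1
      hence x': "p = p0" "x' = E q (r+1) (a+b) # x1" unfolding T0_def by (auto split: if_splits)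
      have "isX r (E q (r+1) (a+b))" using y z by (auto simp: isX_def)
      moreover have "btri r (dd x') (dd (z # x1))"
        unfolding x' z dd_cons btri_def using y z x' by (intro bexI[of _ q]) auto
      ultimately show ?thesis using x1X x' by simp
    next
      case 2
      hence "btri r (dd x2) (dd x1)" "list_all (isX r) x2" using T1p by auto
      from \<open>btri r (dd x2) (dd x1)\<close> have "btri r (dd (E p (r+1) a # x2)) (dd (E p (r+1) a # x1))"
        unfolding dd_cons by (rule btri_shift)
      thus ?thesis using 2 zX z \<open>list_all (isX r) x2\<close> by simp
    qed
  qed
  ultimately show ?case by (intro exI[of _ T]) auto
qed


definition tv :: "gen list \<Rightarrow> complex \<times> gen list \<times> gen list \<Rightarrow> fa" where
  "tv u t = fscale (fst t) (mon (u @ fst (snd t) @ snd (snd t)))"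

definition tp :: "nat \<Rightarrow> gen list \<Rightarrow> complex \<times> gen list \<times> gen list \<Rightarrow> bool" where
  "tp r x0 t \<longleftrightarrow> list_all (nminus_gen r) (fst (snd t)) \<and> list_all (isX r) (snd (snd t))
                 \<and> btri r (dd (snd (snd t))) (dd x0)"

definition tsc :: "complex \<Rightarrow> complex \<times> gen list \<times> gen list \<Rightarrow> complex \<times> gen list \<times> gen list" where
  "tsc c t = (c * fst t, snd t)"

lemma tv_tsc: "tv u (tsc c t) = fscale c (tv u t)"
  by (auto simp: tv_def tsc_def fscale_def)

lemma fscale_lsum_tv: "fscale c (lsum (map (tv u) T)) = lsum (map (tv u) (map (tsc c) T))"
  by (simp add: fscale_lsum comp_def tv_tsc)

lemma fscale_fadd: "fscale c (fadd a b) = fadd (fscale c a) (fscale c b)"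
  by (auto simp: fscale_def fadd_def algebra_simps)

lemma lemB:
  assumes "list_all (nminus_gen r) w"
  shows "list_all (isX r) x \<Longrightarrow> list_all (valid r) u \<Longrightarrow>
    \<exists>T. ueq r (mon (u @ x @ w)) (fadd (mon (u @ w @ x)) (lsum (map (tv u) T))) \<and> (\<forall>t\<in>set T. tp r x t)"
using assms proof (induction w arbitrary: x u)
  case Nil
  show ?case by (intro exI[of _ "[]"]) (simp add: ueq_refl)
next
  case (Cons y w)
  note IHw = Cons.IH
  have vu: "list_all (valid r) u" by fact
  have xX: "list_all (isX r) x" by fact
  have yN: "nminus_gen r y" and wN: "list_all (nminus_gen r) w" using Cons.prems by auto
  have vw: "list_all (valid r) w" using nminus_valid_list[OF wN] .
  have vy: "valid r y" using nminus_valid[OF yN] .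
  from lemA[OF xX yN vu vw] obtain TA where
    A: "ueq r (mon (u @ x @ y # w)) (fadd (mon (u @ y # x @ w)) (lsum (map (\<lambda>x'. fscale (-1) (mon (u @ x' @ w))) TA)))"
    and TAp: "\<forall>x'\<in>set TA. list_all (isX r) x' \<and> btri r (dd x') (dd x)" by blast
  have vuy: "list_all (valid r) (u @ [y])" using vu vy by simp
  from IHw[OF xX vuy wN] obtain T0 where
    T0: "ueq r (mon ((u@[y]) @ x @ w)) (fadd (mon ((u@[y]) @ w @ x)) (lsum (map (tv (u@[y])) T0)))"
    and T0p: "\<forall>t\<in>set T0. tp r x t" by blast
  have aux: "\<And>L. \<forall>x'\<in>set L. list_all (isX r) x' \<and> btri r (dd x') (dd x) \<Longrightarrow>
     \<exists>T'. ueq r (lsum (map (\<lambda>x'. fscale (-1) (mon (u @ x' @ w))) L)) (lsum (map (tv u) T')) \<and> (\<forall>t\<in>set T'. tp r x t)"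
  proof -
    fix L show "\<forall>x'\<in>set L. list_all (isX r) x' \<and> btri r (dd x') (dd x) \<Longrightarrow>
     \<exists>T'. ueq r (lsum (map (\<lambda>x'. fscale (-1) (mon (u @ x' @ w))) L)) (lsum (map (tv u) T')) \<and> (\<forall>t\<in>set T'. tp r x t)"
    proof (induction L)
      case Nil show ?case by (intro exI[of _ "[]"]) (simp add: ueq_refl)
    next
      case (Cons x' L)
      from Cons.prems have x'X: "list_all (isX r) x'" and x'b: "btri r (dd x') (dd x)" by auto
      from Cons.IH Cons.prems obtain T1 where T1: "ueq r (lsum (map (\<lambda>x'. fscale (-1) (mon (u @ x' @ w))) L)) (lsum (map (tv u) T1))"
        and T1p: "\<forall>t\<in>set T1. tp r x t" by auto
      from IHw[OF x'X vu wN] obtain T2 where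
        T2: "ueq r (mon (u @ x' @ w)) (fadd (mon (u @ w @ x')) (lsum (map (tv u) T2)))"
        and T2p: "\<forall>t\<in>set T2. tp r x' t" by blast
      define T' where "T' = (-1, w, x') # map (tsc (-1)) T2 @ T1"
      have "ueq r (lsum (map (\<lambda>x'. fscale (-1) (mon (u @ x' @ w))) (x' # L)))
         (fadd (fscale (-1) (fadd (mon (u @ w @ x')) (lsum (map (tv u) T2)))) (lsum (map (tv u) T1)))"
        using ueq_add[OF ueq_scale[OF T2] T1] by simp
      moreover have "fadd (fscale (-1) (fadd (mon (u @ w @ x')) (lsum (map (tv u) T2)))) (lsum (map (tv u) T1))
          = lsum (map (tv u) T')"
        unfolding T'_def fscale_fadd fscale_lsum_tv by (simp add: lsum_append fadd_assoc tv_def)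
      moreover have "\<forall>t\<in>set T'. tp r x t"
        unfolding T'_def using T1p T2p x'b wN x'X
        by (auto simp: tp_def tsc_def) (metis btri_trans fst_conv snd_conv)
      ultimately show ?case by auto
    qed
  qed
  from aux[OF TAp] obtain TB where
    TB: "ueq r (lsum (map (\<lambda>x'. fscale (-1) (mon (u @ x' @ w))) TA)) (lsum (map (tv u) TB))"
    and TBp: "\<forall>t\<in>set TB. tp r x t" by blast
  define sh where "sh = (\<lambda>t::complex \<times> gen list \<times> gen list. (fst t, y # fst (snd t), snd (snd t)))"
  define T where "T = map sh T0 @ TB"
  have "ueq r (mon (u @ x @ y # w)) (fadd (fadd (mon ((u@[y]) @ w @ x)) (lsum (map (tv (u@[y])) T0))) (lsum (map (tv u) TB)))"
    using ueq_trans[OF A ueq_add[OF _ TB]] T0 by simp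
  moreover have "fadd (fadd (mon ((u@[y]) @ w @ x)) (lsum (map (tv (u@[y])) T0))) (lsum (map (tv u) TB))
     = fadd (mon (u @ (y # w) @ x)) (lsum (map (tv u) T))"
  proof -
    have e: "map (tv (u@[y])) T0 = map (tv u) (map sh T0)" by (simp add: tv_def sh_def)
    show ?thesis unfolding T_def map_append lsum_append e by (simp add: fadd_assoc)
  qed
  moreover have "\<forall>t\<in>set T. tp r x t"
    unfolding T_def using T0p TBp yN by (auto simp: tp_def sh_def)
  ultimately show ?case by auto
qed


lemma move_z:
  "isX r z \<Longrightarrow> list_all (isX r) p \<Longrightarrow> list_all (valid r) u \<Longrightarrow> list_all (valid r) v \<Longrightarrow>
   ueq r (mon (u @ z # p @ v)) (mon (u @ p @ z # v))"
proof (induction p arbitrary: u)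
  case Nil thus ?case by (simp add: ueq_refl)
next
  case (Cons z' p)
  have z'X: "isX r z'" and pX: "list_all (isX r) p" using Cons.prems by auto
  have vpv: "list_all (valid r) (p @ v)" using isX_valid_list[OF pX] Cons.prems by simp
  have 1: "ueq r (mon (u @ z # z' # p @ v)) (mon (u @ z' # z # p @ v))"
    using ueq_rel_comm[OF Cons.prems(1) z'X Cons.prems(3) vpv] .
  have vu: "list_all (valid r) (u @ [z'])" using Cons.prems isX_valid[OF z'X] by simp
  have 2: "ueq r (mon ((u @ [z']) @ z # p @ v)) (mon ((u @ [z']) @ p @ z # v))"
    using Cons.IH[OF Cons.prems(1) pX vu Cons.prems(4)] .
  show ?case using ueq_trans[OF 1] 2 by simp
qed

lemma perm_ueq:
  "mset x = mset x' \<Longrightarrow> list_all (isX r) x' \<Longrightarrow> list_all (valid r) u \<Longrightarrow> list_all (valid r) v \<Longrightarrow>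
   ueq r (mon (u @ x @ v)) (mon (u @ x' @ v))"
proof (induction x arbitrary: x' u)
  case Nil thus ?case by (simp add: ueq_refl)
next
  case (Cons z x1)
  have "z \<in> set x'" using Cons.prems(1) by (metis list.set_intros(1) set_mset_mset)
  then obtain p q where x': "x' = p @ z # q" by (meson split_list)
  have m: "mset x1 = mset (p @ q)" using Cons.prems(1) x' by simp
  have zX: "isX r z" and pqX: "list_all (isX r) (p @ q)" using Cons.prems(2) x' by auto
  have pX: "list_all (isX r) p" using pqX by simp
  have vu: "list_all (valid r) (u @ [z])" using Cons.prems isX_valid[OF zX] by simp
  have 1: "ueq r (mon ((u @ [z]) @ x1 @ v)) (mon ((u @ [z]) @ (p @ q) @ v))"
    using Cons.IH[OF m pqX vu Cons.prems(4)] .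
  have vqv: "list_all (valid r) (q @ v)" using isX_valid_list[OF pqX] Cons.prems by simp
  have 2: "ueq r (mon (u @ z # p @ (q @ v))) (mon (u @ p @ z # (q @ v)))"
    using move_z[OF zX pX Cons.prems(3) vqv] .
  show ?case using ueq_trans[OF _ 2] 1 x' by simp
qed

definition srt :: "gen list \<Rightarrow> nat \<Rightarrow> nat list" where "srt x i = sort (lets i x)"

definition canon :: "nat \<Rightarrow> gen list \<Rightarrow> gen list" where
  "canon r x = concat (map (\<lambda>i. map (E i (r+1)) (srt x i)) [1..<r+1])"

lemma xplus_canon: "xplus r (srt x) = mon (canon r x)"
  by (simp add: xplus_def canon_def)

lemma sum_list_if_distinct:
  "distinct js \<Longrightarrow> (\<Sum>i\<leftarrow>js. (if j = i then M else (0::'a::comm_monoid_add))) = (if j \<in> set js then M else 0)"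
  by (induction js) auto

lemma mset_lets_aux:
  "distinct js \<Longrightarrow> list_all (\<lambda>z. \<exists>i a. z = E i k a \<and> i \<in> set js) x \<Longrightarrow>
   (\<Sum>i\<leftarrow>js. image_mset (E i k) (mset (lets i x))) = mset x"
proof (induction x)
  case Nil thus ?case by (induction js) auto
next
  case (Cons z x)
  then obtain j a where z: "z = E j k a" "j \<in> set js" by auto
  have "(\<Sum>i\<leftarrow>js. image_mset (E i k) (mset (lets i (z # x))))
      = (\<Sum>i\<leftarrow>js. (if j = i then {#E j k a#} else 0) + image_mset (E i k) (mset (lets i x)))"
    unfolding z by (intro arg_cong[where f=sum_list] map_cong) auto
  also have "\<dots> = (\<Sum>i\<leftarrow>js. (if j = i then {#E j k a#} else 0)) + (\<Sum>i\<leftarrow>js. image_mset (E i k) (mset (lets i x)))"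
    by (rule sum_list_addf)
  also have "\<dots> = {#E j k a#} + mset x"
    using Cons z by (simp add: sum_list_if_distinct)
  finally show ?case using z by simp
qed

lemma mset_canon: "list_all (isX r) x \<Longrightarrow> mset (canon r x) = mset x"
proof -
  assume xX: "list_all (isX r) x"
  have "mset (canon r x) = (\<Sum>i\<leftarrow>[1..<r+1]. image_mset (E i (r+1)) (mset (lets i x)))"
    unfolding canon_def srt_def mset_concat by (simp add: comp_def)
  also have "\<dots> = mset x"
  proof (rule mset_lets_aux)
    show "list_all (\<lambda>z. \<exists>i a. z = E i (r+1) a \<and> i \<in> set [1..<r+1]) x"
      unfolding list_all_iff
    proof
      fix z assume "z \<in> set x"
      then obtain i a where "z = E i (r+1) a" "1 \<le> i" "i \<le> r" using xX by (auto simp: list_all_iff isX_def)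
      thus "\<exists>i a. z = E i (r+1) a \<and> i \<in> set [1..<r+1]" by auto
    qed
  qed simp
  finally show ?thesis .
qed

lemma lets_pos: "list_all (isX r) x \<Longrightarrow> a \<in> set (lets i x) \<Longrightarrow> 0 < a"
  by (induction x) (auto simp: isX_def split: if_splits)

lemma FplusR_srt: "list_all (isX r) x \<Longrightarrow> FplusR r (srt x)"
  by (auto simp: FplusR_def Fplus_def srt_def lets_pos)

lemma sum_list_sort: "sum_list (sort (l::nat list)) = sum_list l"
  by (metis mset_sort sum_mset_sum_list)

lemma ssize_srt: "ssize (srt x) = dd x"
  by (auto simp: ssize_def srt_def dd_def sum_list_sort)

lemma lets_append: "lets i (xs @ ys) = lets i xs @ lets i ys"
  by (induction i xs rule: lets.induct) auto

lemma lets_map: "lets i (map (E j k) l) = (if j = i then l else [])"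
  by (induction l) auto

lemma lets_concat: "lets i (concat L) = concat (map (lets i) L)"
  by (induction L) (auto simp: lets_append)

lemma concat_if_distinct:
  "distinct js \<Longrightarrow> concat (map (\<lambda>j. if j = i then l else []) js) = (if i \<in> set js then l else [])"
  by (induction js) auto

lemma dd_x0: "i \<in> {1..r} \<Longrightarrow> dd (concat (map (\<lambda>i. map (E i (r+1)) (ss i)) [1..<r+1])) i = ssize ss i"
proof -
  assume i: "i \<in> {1..r}"
  have "lets i (concat (map (\<lambda>i. map (E i (r+1)) (ss i)) [1..<r+1])) = concat (map (\<lambda>j. if j = i then ss i else []) [1..<r+1])"
    by (simp add: lets_concat lets_map comp_def cong: if_cong)
  also have "\<dots> = ss i" using i by (subst concat_if_distinct) auto
  finally show ?thesis by (simp add: dd_def ssize_def)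
qed

lemma btri_cong: "(\<forall>i\<in>{1..r}. d i = d2 i) \<Longrightarrow> (\<forall>i\<in>{1..r}. e i = e2 i) \<Longrightarrow> btri r d e \<Longrightarrow> btri r d2 e2"
  unfolding btri_def
  by (metis atLeastAtMost_iff le_trans less_imp_le_nat)


lemma lsum_mon: "distinct ws \<Longrightarrow> lsum (map (\<lambda>w. fscale (h w) (mon w)) ws) v = (if v \<in> set ws then h v else 0)"
  by (induction ws) (auto simp: fadd_def fscale_def mon_def fzero_def)

lemma fsub_fscale: "fsub (fscale c a) (fscale c b) = fscale c (fsub a b)"
  by (auto simp: fsub_def fscale_def algebra_simps)

lemma collect:
  "\<forall>w\<in>set ws. \<exists>T. ueq r (F w) (lsum (map G T)) \<and> (\<forall>t\<in>set T. Q t) \<Longrightarrow>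
   \<exists>T. ueq r (lsum (map F ws)) (lsum (map G T)) \<and> (\<forall>t\<in>set T. Q t)"
proof (induction ws)
  case Nil show ?case by (intro exI[of _ "[]"]) (simp add: ueq_refl)
next
  case (Cons w ws)
  from Cons.prems obtain T1 where "ueq r (F w) (lsum (map G T1))" "\<forall>t\<in>set T1. Q t" by auto
  moreover from Cons obtain T2 where "ueq r (lsum (map F ws)) (lsum (map G T2))" "\<forall>t\<in>set T2. Q t" by auto
  ultimately show ?case
    by (intro exI[of _ "T1 @ T2"]) (auto simp: lsum_append intro: ueq_add)
qed

theorem lemma3p4:
  fixes r :: nat and eta :: "nat \<Rightarrow> nat" and g :: fa and ss :: "nat \<Rightarrow> nat list"
  assumes "2 \<le> r"
    and "\<forall>i. (i = 0 \<or> r < i) \<longrightarrow> eta i = 0"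
    and "eta \<noteq> (\<lambda>_. 0)"
    and "g \<in> weight_space r eta"
    and "FplusR r ss"
  shows "\<exists>n c gs sss.
           (\<forall>k<n. gs k \<in> Uneg r \<and> FplusR r (sss k) \<and> btri r (ssize (sss k)) (ssize ss))
         \<and> ueq r (fcomm (xplus r ss) g)
                (fsum n (\<lambda>k. fscale (c k) (fmul (gs k) (xplus r (sss k)))))"
proof -
  have gU: "g \<in> Uneg r" using assms(4) by (simp add: weight_space_def)
  hence fin: "finite {w. g w \<noteq> 0}" and gN: "\<forall>w. g w \<noteq> 0 \<longrightarrow> list_all (nminus_gen r) w"
    by (auto simp: Uneg_def)
  obtain ws where ws: "set ws = {w. g w \<noteq> 0}" "distinct ws" using finite_distinct_list[OF fin] by blast
  define x0 where "x0 = concat (map (\<lambda>i. map (E i (r+1)) (ss i)) [1..<r+1])"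
  have X0: "xplus r ss = mon x0" by (simp add: xplus_def x0_def)
  have x0X: "list_all (isX r) x0"
    using assms(5) unfolding x0_def FplusR_def Fplus_def by (auto simp: list_all_iff isX_def)
  have gl: "g = lsum (map (\<lambda>w. fscale (g w) (mon w)) ws)"
    using lsum_mon[OF ws(2)] ws(1) by (auto simp: fun_eq_iff)
  have fc: "fcomm (xplus r ss) g = lsum (map (\<lambda>w. fscale (g w) (fsub (mon (x0 @ w)) (mon (w @ x0)))) ws)"
  proof -
    have "fcomm (xplus r ss) g = fsub (lsum (map (\<lambda>w. fscale (g w) (mon (x0 @ w))) ws)) (lsum (map (\<lambda>w. fscale (g w) (mon (w @ x0))) ws))"
      unfolding fcomm_def X0 by (subst (1 2) gl) (simp add: fmul_lsum_r fmul_lsum_l comp_def fmul_fscale_r fmul_fscale_l fmul_mon_mon)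
    thus ?thesis by (simp add: fsub_lsum fsub_fscale)
  qed
  define G where "G = (\<lambda>t::complex \<times> gen list \<times> gen list. fscale (fst t) (fmul (mon (fst (snd t))) (xplus r (srt (snd (snd t))))))"
  have each: "\<forall>w\<in>set ws. \<exists>T. ueq r (fscale (g w) (fsub (mon (x0 @ w)) (mon (w @ x0)))) (lsum (map G T)) \<and> (\<forall>t\<in>set T. tp r x0 t)"
  proof
    fix w assume "w \<in> set ws"
    hence wN: "list_all (nminus_gen r) w" using ws gN by auto
    from lemB[OF wN x0X, of "[]"] obtain T where
      T: "ueq r (mon (x0 @ w)) (fadd (mon (w @ x0)) (lsum (map (tv []) T)))" and Tp: "\<forall>t\<in>set T. tp r x0 t"
      by auto
    have 1: "ueq r (fscale (g w) (fsub (mon (x0 @ w)) (mon (w @ x0)))) (lsum (map (tv []) (map (tsc (g w)) T)))"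
      using ueq_scale[OF ueq_fsub[OF T]] by (simp add: fscale_lsum_tv)
    have Tp': "\<forall>t\<in>set (map (tsc (g w)) T). tp r x0 t" using Tp by (auto simp: tp_def tsc_def)
    have 2: "ueq r (lsum (map (tv []) (map (tsc (g w)) T))) (lsum (map G (map (tsc (g w)) T)))"
    proof (rule ueq_lsum, rule ballI)
      fix t assume "t \<in> set (map (tsc (g w)) T)"
      hence tp: "tp r x0 t" using Tp' by blast
      obtain c w' x' where t: "t = (c, w', x')" by (cases t) auto
      have x'X: "list_all (isX r) x'" and w'N: "list_all (nminus_gen r) w'" using tp t by (auto simp: tp_def)
      have "ueq r (mon (w' @ canon r x' @ [])) (mon (w' @ x' @ []))"
        by (rule perm_ueq[OF mset_canon[OF x'X] x'X nminus_valid_list[OF w'N]]) simp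
      hence "ueq r (mon (w' @ x')) (mon (w' @ canon r x'))" using ueq_sym by simp
      thus "ueq r (tv [] t) (G t)"
        unfolding t tv_def G_def by (simp add: xplus_canon fmul_mon_mon ueq_scale)
    qed
    show "\<exists>T. ueq r (fscale (g w) (fsub (mon (x0 @ w)) (mon (w @ x0)))) (lsum (map G T)) \<and> (\<forall>t\<in>set T. tp r x0 t)"
      using ueq_trans[OF 1 2] Tp' by blast
  qed
  from collect[OF each] obtain T where
    T: "ueq r (lsum (map (\<lambda>w. fscale (g w) (fsub (mon (x0 @ w)) (mon (w @ x0)))) ws)) (lsum (map G T))"
    and Tp: "\<forall>t\<in>set T. tp r x0 t" by blast
  have dx0: "\<forall>i\<in>{1..r}. dd x0 i = ssize ss i" unfolding x0_def using dd_x0 by blast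
  show ?thesis
  proof (intro exI conjI)
    show "ueq r (fcomm (xplus r ss) g)
       (fsum (length T) (\<lambda>k. fscale (fst (T ! k)) (fmul (mon (fst (snd (T ! k)))) (xplus r (srt (snd (snd (T ! k))))))))"
      using T unfolding fc lsum_fsum G_def by simp
    show "\<forall>k<length T. mon (fst (snd (T ! k))) \<in> Uneg r \<and> FplusR r (srt (snd (snd (T ! k))))
        \<and> btri r (ssize (srt (snd (snd (T ! k))))) (ssize ss)"
    proof (intro allI impI conjI)
      fix k assume "k < length T"
      hence tp: "tp r x0 (T ! k)" using Tp by simp
      have "{v. mon (fst (snd (T ! k))) v \<noteq> 0} = {fst (snd (T ! k))}" by (auto simp: mon_def)
      thus "mon (fst (snd (T ! k))) \<in> Uneg r" using tp by (auto simp: Uneg_def tp_def mon_def split: if_splits)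
      show "FplusR r (srt (snd (snd (T ! k))))" using tp FplusR_srt by (auto simp: tp_def)
      show "btri r (ssize (srt (snd (snd (T ! k))))) (ssize ss)"
      proof -
        have b: "btri r (dd (snd (snd (T ! k)))) (dd x0)" using tp by (simp add: tp_def)
        have "btri r (dd (snd (snd (T ! k)))) (ssize ss)"
          by (rule btri_cong[OF _ dx0 b]) simp
        thus ?thesis unfolding ssize_srt .
      qed
    qed
  qed
qed

end
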